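(* Fix $N\in\mathbb{N}_+$. Consider all triples $(N_1,N_2,\lambda)\in\mathbb{N}^3$ with $N_1+N_2\geq1$ such that the symmetric nested array $\mathcal{D}=\mathcal{G}\cup(\max\mathcal{G}-\mathcal{G}+\lambda)$, with $\mathcal{G}=\mathcal{G}_{\mathrm{NA}}(N_1,N_2)$, satisfies $|\mathcal{D}|=N$ and $\mathcal{D}+\mathcal{D}=\{0,\ldots,2\max\mathcal{D}\}$. Among such triples, there is one maximizing the aperture $\max\mathcal{D}$ for which $\mathcal{D}=\mathcal{D}_{\mathrm{CNA}}(N_1',N_2')$ for some $N_1',N_2'\in\mathbb{N}$.
   Context: For $a\in\mathbb{Z}$, $b\in\mathbb{N}_+$, $c\in\mathbb{Z}$, $\{a:b:c\}=\{a,a+b,\ldots\}\cap(-\infty,c]$ (empty if $c<a$), and $\{a:c\}=\{a:1:c\}$. Set sums/differences are elementwise: $\mathcal{A}+\mathcal{B}=\{a+b\}$, $\mathcal{A}+c=\{a+c\}$, $c-\mathcal{A}=\{c-a\}$. For $N_1,N_2\in\mathbb{N}$ let $\mathcal{D}_1=\{0:N_1-1\}$ and $\mathcal{D}_2=\{0:N_1+1:(N_2-1)(N_1+1)\}$. The Nested Array is $\mathcal{G}_{\mathrm{NA}}(N_1,N_2)=\mathcal{D}_1\cup(\mathcal{D}_2+N_1)$. The Concatenated Nested Array is $\mathcal{D}_{\mathrm{CNA}}(N_1,N_2)=\mathcal{D}_1\cup(\mathcal{D}_2+N_1)\cup(\mathcal{D}_1+N_2(N_1+1))$. *)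

theory Defs
  imports Main
begin

text \<open>Arithmetic progression set {a:b:c} = {a, a+b, ...} \<inter> (-\<infinity>, c] (empty if c < a).\<close>
definition apset :: "int \<Rightarrow> int \<Rightarrow> int \<Rightarrow> int set" where
  "apset a b c = {a + int k * b | k. a + int k * b \<le> c}"

definition setplus :: "int set \<Rightarrow> int set \<Rightarrow> int set" where
  "setplus A B = {a + b | a b. a \<in> A \<and> b \<in> B}"

definition D1 :: "nat \<Rightarrow> int set" where
  "D1 N1 = apset 0 1 (int N1 - 1)"

definition D2 :: "nat \<Rightarrow> nat \<Rightarrow> int set" where
  "D2 N1 N2 = apset 0 (int N1 + 1) ((int N2 - 1) * (int N1 + 1))"

definition G_NA :: "nat \<Rightarrow> nat \<Rightarrow> int set" where
  "G_NA N1 N2 = D1 N1 \<union> ((\<lambda>x. x + int N1) ` D2 N1 N2)"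

definition D_CNA :: "nat \<Rightarrow> nat \<Rightarrow> int set" where
  "D_CNA N1 N2 = D1 N1 \<union> ((\<lambda>x. x + int N1) ` D2 N1 N2)
      \<union> ((\<lambda>x. x + int N2 * (int N1 + 1)) ` D1 N1)"

definition symNA :: "nat \<Rightarrow> nat \<Rightarrow> nat \<Rightarrow> int set" where
  "symNA N1 N2 lam = (let G = G_NA N1 N2 in G \<union> ((\<lambda>g. Max G - g + int lam) ` G))"

definition admissible :: "nat \<Rightarrow> nat \<times> nat \<times> nat \<Rightarrow> bool" where
  "admissible N t = (case t of (N1, N2, lam) \<Rightarrow>
      N1 + N2 \<ge> 1 \<and> card (symNA N1 N2 lam) = N \<and>
      setplus (symNA N1 N2 lam) (symNA N1 N2 lam) = {0 .. 2 * Max (symNA N1 N2 lam)})"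

end

theory Submission
  imports Defs
begin

lemma apset01: "apset 0 1 c = {0..c}"
proof -
  have "x \<in> apset 0 1 c" if "x \<in> {0..c}" for x
    using that unfolding apset_def by (auto intro!: exI[of _ "nat x"])
  then show ?thesis unfolding apset_def by auto
qed

lemma D1_eq: "D1 n = {0..int n - 1}"
  unfolding D1_def by (simp add: apset01)

lemma D2_eq: "D2 n1 n2 = (\<lambda>k. int k * (int n1 + 1)) ` {..<n2}"
proof -
  have "int k * (int n1 + 1) \<le> (int n2 - 1) * (int n1 + 1) \<longleftrightarrow> k < n2" for k
    by (subst mult_le_cancel_right_pos) auto
  then show ?thesis unfolding D2_def apset_def by auto
qed

lemma G_eq: "G_NA n1 n2 = {0..int n1 - 1} \<union> (\<lambda>k. int k * (int n1 + 1) + int n1) ` {..<n2}"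
  unfolding G_NA_def D1_eq D2_eq by (simp add: image_image)

lemma sym_basic:
  fixes G :: "int set" and l :: int
  assumes fin: "finite G" and z: "0 \<in> G" and nn: "\<forall>g\<in>G. 0 \<le> g" and l: "0 \<le> l"
  defines "D \<equiv> G \<union> (\<lambda>g. Max G - g + l) ` G"
  shows "finite D" "Max D = Max G + l" "D \<subseteq> {0..Max G + l}"
        "\<And>x. x \<in> D \<Longrightarrow> Max G + l - x \<in> D"
proof -
  have ne: "G \<noteq> {}" using z by auto
  have mx: "\<forall>g\<in>G. g \<le> Max G" using fin by auto
  show "finite D" unfolding D_def using fin by auto
  show sub: "D \<subseteq> {0..Max G + l}" unfolding D_def using mx nn l by fastforce
  have "Max G + l \<in> D" unfolding D_def using z by force
  then show "Max D = Max G + l" using sub \<open>finite D\<close> by (intro Max_eqI) auto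
  show "\<And>x. x \<in> D \<Longrightarrow> Max G + l - x \<in> D" unfolding D_def by auto
qed

lemma sumset_sym:
  fixes D :: "int set"
  assumes sub: "D \<subseteq> {0..M}" and sym: "\<And>x. x \<in> D \<Longrightarrow> M - x \<in> D"
    and low: "{0..M} \<subseteq> setplus D D"
  shows "setplus D D = {0..2*M}"
proof
  show "setplus D D \<subseteq> {0..2*M}"
  proof
    fix x assume "x \<in> setplus D D"
    then obtain a b where "x = a + b" "a \<in> D" "b \<in> D" unfolding setplus_def by auto
    moreover have "0 \<le> a" "a \<le> M" "0 \<le> b" "b \<le> M" using sub \<open>a \<in> D\<close> \<open>b \<in> D\<close> by auto
    ultimately show "x \<in> {0..2*M}" by simp
  qed
  show "{0..2*M} \<subseteq> setplus D D"
  proof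
    fix x assume x: "x \<in> {0..2*M}"
    show "x \<in> setplus D D"
    proof (cases "x \<le> M")
      case True then show ?thesis using low x by auto
    next
      case False
      then have "2*M - x \<in> setplus D D" using low x by auto
      then obtain a b where ab: "2*M - x = a + b" "a \<in> D" "b \<in> D" unfolding setplus_def by auto
      then have "x = (M - a) + (M - b)" by simp
      then show ?thesis using sym ab unfolding setplus_def by blast
    qed
  qed
qed

lemma G_fin: "finite (G_NA n1 n2)" by (simp add: G_eq)
lemma G_nn: "\<forall>g\<in>G_NA n1 n2. 0 \<le> g" by (auto simp: G_eq)
lemma G_zero: "n1 + n2 \<ge> 1 \<Longrightarrow> 0 \<in> G_NA n1 n2"
  by (cases n1) (auto simp: G_eq image_iff intro: bexI[of _ 0])

lemma G_max1:
  assumes "n2 \<ge> 1"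
  shows "Max (G_NA n1 n2) = int n2 * (int n1 + 1) - 1"
proof (rule Max_eqI[OF G_fin])
  fix y assume "y \<in> G_NA n1 n2"
  then consider "y \<in> {0..int n1 - 1}" | k where "k < n2" "y = int k * (int n1 + 1) + int n1"
    by (auto simp: G_eq)
  then show "y \<le> int n2 * (int n1 + 1) - 1"
  proof cases
    case 1
    have "1 * (int n1 + 1) \<le> int n2 * (int n1 + 1)" using assms by (intro mult_right_mono) auto
    then have h: "int n1 + 1 \<le> int n2 * (int n1 + 1)" by simp
    from 1 have "y \<le> int n1 - 1" by simp
    then show ?thesis using h by linarith
  next
    case 2
    have "int k * (int n1 + 1) \<le> (int n2 - 1) * (int n1 + 1)" using 2 by (intro mult_right_mono) auto
    then show ?thesis using 2 by (simp add: algebra_simps)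
  qed
next
  have "int n2 * (int n1 + 1) - 1 = int (n2 - 1) * (int n1 + 1) + int n1"
    using assms by (simp add: of_nat_diff algebra_simps)
  then show "int n2 * (int n1 + 1) - 1 \<in> G_NA n1 n2" using assms
    by (auto simp: G_eq image_iff intro!: bexI[of _ "n2 - 1"])
qed

lemma symNA_facts:
  fixes lam :: nat
  assumes "n1 + n2 \<ge> 1"
  defines "D \<equiv> symNA n1 n2 lam" and "M \<equiv> Max (G_NA n1 n2) + int lam"
  shows "D = G_NA n1 n2 \<union> (\<lambda>g. Max (G_NA n1 n2) - g + int lam) ` G_NA n1 n2"
    "finite D" "Max D = M" "D \<subseteq> {0..M}" "\<And>x. x \<in> D \<Longrightarrow> M - x \<in> D"
  using sym_basic[OF G_fin G_zero[OF assms(1)] G_nn, of "int lam"]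
  unfolding D_def M_def symNA_def Let_def by auto

lemma interval_shift: "(\<lambda>x. x + (c::int)) ` {u..v} = {u+c..v+c}"
proof -
  have "y \<in> (\<lambda>x. x + c) ` {u..v}" if "y \<in> {u+c..v+c}" for y
    using that by (auto simp: image_iff intro!: bexI[of _ "y - c"])
  then show ?thesis by auto
qed

lemma B_card: "card ((\<lambda>k. int k * p + c) ` {..<n}) = n" if "p > 0" for p c :: int
proof -
  have "inj_on (\<lambda>k. int k * p + c) {..<n}" using that by (auto simp: inj_on_def)
  then show ?thesis by (simp add: card_image)
qed

lemma CNA_props:
  fixes a b :: nat assumes b: "b \<ge> 1"
  shows "symNA a b a = D_CNA a b"
    "card (D_CNA a b) = 2*a+b"
    "Max (symNA a b a) = int b*(int a+1) + int a - 1"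
    "setplus (symNA a b a) (symNA a b a) = {0..2*Max(symNA a b a)}"
proof -
  define p where "p = int a + 1"
  have p0: "p > 0" unfolding p_def by simp
  define L where "L = int b * p - 1"
  define A where "A = {0..int a - 1}"
  define B where "B = (\<lambda>k. int k * p + int a) ` {..<b}"
  define E where "E = {int b * p..int b * p + int a - 1}"
  have G: "G_NA a b = A \<union> B" unfolding A_def B_def p_def G_eq ..
  have L: "Max (G_NA a b) = L" unfolding L_def p_def using G_max1[OF b] by simp
  have nab: "a + b \<ge> 1" using b by simp
  have Bbnd: "int a \<le> x \<and> x \<le> L" if "x \<in> B" for x
  proof -
    from that obtain k where k: "k < b" "x = int k * p + int a" unfolding B_def by auto
    have "int k * p \<le> (int b - 1) * p" using k p0 by (intro mult_right_mono) auto
    then show ?thesis using k p0 unfolding L_def p_def by (simp add: algebra_simps)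
  qed
  have E': "(\<lambda>x. x + int b * (int a + 1)) ` D1 a = E"
    unfolding D1_eq interval_shift E_def p_def by (simp add: algebra_simps)
  have CNA: "D_CNA a b = A \<union> B \<union> E"
    unfolding D_CNA_def using G E' unfolding G_NA_def by simp
  have R1: "L - g + int a \<in> A \<union> B \<union> E" if gAB: "g \<in> A \<union> B" for g
  proof (cases "g \<in> A")
    case True then show ?thesis unfolding A_def E_def L_def by auto
  next
    case False
    then obtain k where k: "k < b" "g = int k * p + int a" using gAB False unfolding B_def by auto
    have "L - g + int a = int (b - 1 - k) * p + int a"
      using k unfolding L_def p_def by (simp add: of_nat_diff algebra_simps)
    moreover have "b - 1 - k < b" using b by simp
    ultimately show ?thesis unfolding B_def by blast
  qed
  have R2: "x \<in> (\<lambda>g. L - g + int a) ` (A \<union> B)" if "x \<in> E" for x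
  proof -
    have "L + int a - x \<in> A" using that unfolding E_def A_def L_def by auto
    moreover have "x = L - (L + int a - x) + int a" by simp
    ultimately show ?thesis by blast
  qed
  have s1: "(\<lambda>g. L - g + int a) ` (A \<union> B) \<subseteq> A \<union> B \<union> E"
    by (rule image_subsetI) (rule R1)
  have s2: "E \<subseteq> (\<lambda>g. L - g + int a) ` (A \<union> B)" using R2 by (rule subsetI)
  have D0: "symNA a b a = A \<union> B \<union> (\<lambda>g. L - g + int a) ` (A \<union> B)"
    unfolding symNA_facts(1)[OF nab] L unfolding G by simp
  have D: "symNA a b a = A \<union> B \<union> E"
    unfolding D0 using s1 s2 by auto
  then show "symNA a b a = D_CNA a b" using CNA by simp
  have fA: "finite A" "finite B" "finite E" unfolding A_def B_def E_def by auto
  have disj1: "A \<inter> B = {}" using Bbnd unfolding A_def by fastforce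
  have bp: "p \<le> int b * p" using b p0 mult_right_mono[of 1 "int b" p] by simp
  have disj2: "(A \<union> B) \<inter> E = {}"
  proof -
    { fix x assume x: "x \<in> A \<union> B" "x \<in> E"
      have False
      proof (cases "x \<in> A")
        case True then show False using x bp unfolding A_def E_def p_def by auto
      next
        case False then show False using x Bbnd[of x] unfolding E_def L_def by auto
      qed }
    then show ?thesis by blast
  qed
  have cA: "card A = a" "card B = b" "card E = a"
    unfolding A_def E_def B_def using B_card[OF p0] by auto
  show "card (D_CNA a b) = 2*a+b" unfolding CNA
    using fA disj1 disj2 cA by (simp add: card_Un_disjoint)
  have MX: "Max (symNA a b a) = L + int a" using symNA_facts(3)[OF nab] L by simp
  then show "Max (symNA a b a) = int b*(int a+1) + int a - 1" unfolding L_def p_def by simp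
  show "setplus (symNA a b a) (symNA a b a) = {0..2*Max(symNA a b a)}"
    unfolding MX
  proof (rule sumset_sym)
    show "symNA a b a \<subseteq> {0..L + int a}" using symNA_facts(4)[OF nab] L by simp
    show "\<And>x. x \<in> symNA a b a \<Longrightarrow> L + int a - x \<in> symNA a b a" using symNA_facts(5)[OF nab] L by simp
    show "{0..L + int a} \<subseteq> setplus (symNA a b a) (symNA a b a)"
    proof
      fix x assume x: "x \<in> {0..L + int a}"
      have inB: "int k * p + int a \<in> symNA a b a" if "k < b" for k
        using that unfolding D B_def by blast
      have inA: "y \<in> symNA a b a" if "0 \<le> y" "y \<le> int a - 1" for y
        using that unfolding D A_def by auto
      show "x \<in> setplus (symNA a b a) (symNA a b a)"
      proof (cases "x \<le> 2 * int a - 2")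
        case True
        define i where "i = min x (int a - 1)"
        have "x = i + (x - i)" by simp
        moreover have "i \<in> symNA a b a" "x - i \<in> symNA a b a"
          using True x by (auto intro!: inA simp: i_def)
        ultimately show ?thesis unfolding setplus_def by blast
      next
        case False
        define y where "y = x - int a"
        have y0: "y \<ge> 0" using False x unfolding y_def by simp
        define k where "k = y div p"
        define r where "r = y mod p"
        have yk: "y = k * p + r" unfolding k_def r_def by simp
        have r0: "0 \<le> r" "r < p" unfolding r_def using p0 by auto
        have k0: "k \<ge> 0" unfolding k_def using y0 p0 by (simp add: pos_imp_zdiv_nonneg_iff)
        have "k < int b"
        proof (rule ccontr)
          assume "\<not> k < int b"
          then have "int b * p \<le> k * p" using p0 by (intro mult_right_mono) auto
          moreover have "x \<le> int b * p - 1 + int a" using x unfolding L_def by simp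
          ultimately show False using yk r0 unfolding y_def by linarith
        qed
        then have kb: "nat k < b" using k0 by simp
        have xk: "int (nat k) * p + int a \<in> symNA a b a" by (rule inB[OF kb])
        show ?thesis
        proof (cases "r \<le> int a - 1")
          case True
          have "x = (int (nat k) * p + int a) + r" using yk k0 unfolding y_def by simp
          moreover have "r \<in> symNA a b a" using True r0 by (intro inA) auto
          ultimately show ?thesis using xk unfolding setplus_def by blast
        next
          case False
          then have "r = int a" using r0 unfolding p_def by simp
          have "x = (int (nat k) * p + int a) + (int 0 * p + int a)"
            using yk k0 \<open>r = int a\<close> unfolding y_def by simp
          moreover have "int 0 * p + int a \<in> symNA a b a" using b by (intro inB) auto
          ultimately show ?thesis using xk unfolding setplus_def by blast
        qed
      qed
    qed
  qed
qed

lemma mono_k: "k < n \<Longrightarrow> (0::int) \<le> p \<Longrightarrow> int k * p \<le> int n * p - p"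
proof -
  assume "k < n" "0 \<le> p"
  then have "int k * p \<le> (int n - 1) * p" by (intro mult_right_mono) auto
  then show ?thesis by (simp add: algebra_simps)
qed

lemma mono_k2: "m \<le> k \<Longrightarrow> (0::int) \<le> p \<Longrightarrow> int m * p \<le> int k * p"
  by (intro mult_right_mono) auto

lemma G_contig:
  assumes "n1 = 0 \<or> n2 \<le> 1"
  shows "G_NA n1 n2 = {0..int (n1+n2) - 1}"
proof -
  consider "n2 = 0" | "n2 = 1" | "n1 = 0" "n2 \<ge> 2" using assms by linarith
  then show ?thesis
  proof cases
    case 1 then show ?thesis by (simp add: G_eq)
  next
    case 2
    have "{0..int n1 - 1} \<union> {int n1} = {0..int n1}" by auto
    then show ?thesis using 2 by (simp add: G_eq lessThan_Suc)
  next
    case 3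
    have "x \<in> (\<lambda>k. int k) ` {..<n2}" if "x \<in> {0..int n2 - 1}" for x
      using that by (auto simp: image_iff intro!: bexI[of _ "nat x"])
    then have "(\<lambda>k. int k) ` {..<n2} = {0..int n2 - 1}" by auto
    then show ?thesis using 3 by (simp add: G_eq)
  qed
qed

lemma refl_interval: "(\<lambda>g. (c::int) - g + l) ` {0..c} = {l..l+c}"
proof -
  have "y \<in> (\<lambda>g. c - g + l) ` {0..c}" if "y \<in> {l..l+c}" for y
    using that by (auto simp: image_iff intro!: bexI[of _ "c + l - y"])
  then show ?thesis by auto
qed

definition fN :: "nat \<Rightarrow> nat \<Rightarrow> int" where
  "fN N a = (int N - 2 * int a) * (int a + 1) + int a - 1"

lemma upper_contig:
  assumes adm: "admissible N (n1, n2, lam)" and c: "n1 = 0 \<or> n2 \<le> 1"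
  shows "\<exists>a. 2*a+1 \<le> N \<and> Max (symNA n1 n2 lam) \<le> fN N a"
proof -
  have n: "n1 + n2 \<ge> 1" and cardN: "card (symNA n1 n2 lam) = N"
    and ss: "setplus (symNA n1 n2 lam) (symNA n1 n2 lam) = {0..2 * Max (symNA n1 n2 lam)}"
    using adm unfolding admissible_def by auto
  define n where "n = int (n1 + n2)"
  define l where "l = int lam"
  have n1: "n \<ge> 1" using n unfolding n_def by simp
  have G: "G_NA n1 n2 = {0..n - 1}" using G_contig[OF c] unfolding n_def .
  have MG: "Max (G_NA n1 n2) = n - 1" unfolding G using n1 by (intro Max_eqI) auto
  have D: "symNA n1 n2 lam = {0..n-1} \<union> {l..l+n-1}"
    using symNA_facts(1)[OF n] unfolding MG unfolding G refl_interval l_def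
    by (simp add: algebra_simps)
  have MD: "Max (symNA n1 n2 lam) = n - 1 + l" using symNA_facts(3)[OF n] MG l_def by simp
  show ?thesis
  proof (cases "l \<le> n")
    case True
    then have "symNA n1 n2 lam = {0..l+n-1}" unfolding D l_def by auto
    then have "int N = l + n" using cardN n1 l_def by auto
    moreover have "l \<ge> 0" unfolding l_def by simp
    ultimately have "N \<ge> 1" using n1 by linarith
    then show ?thesis using MD \<open>int N = l + n\<close> by (intro exI[of _ 0]) (simp add: fN_def)
  next
    case False
    have "{0..n-1} \<inter> {l..l+n-1} = {}" using False by auto
    then have "int N = 2 * n" using cardN n1 unfolding D by (simp add: card_Un_disjoint)
    have "l \<le> 2*n - 1"
    proof (rule ccontr)
      assume "\<not> l \<le> 2*n - 1"
      then have "2*n - 1 \<in> setplus (symNA n1 n2 lam) (symNA n1 n2 lam)" unfolding ss MD using n1 by simp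
      then obtain x y where xy: "2*n-1 = x + y" "x \<in> {0..n-1} \<union> {l..l+n-1}" "y \<in> {0..n-1} \<union> {l..l+n-1}"
        unfolding setplus_def D by blast
      then show False using \<open>\<not> l \<le> 2*n - 1\<close> n1 by auto
    qed
    have "nat (n - 1) * 2 + 1 \<le> N" using \<open>int N = 2 * n\<close> n1 by linarith
    moreover have "Max (symNA n1 n2 lam) \<le> fN N (nat (n - 1))"
      using \<open>int N = 2 * n\<close> n1 \<open>l \<le> 2*n - 1\<close> MD unfolding fN_def by (simp add: algebra_simps)
    ultimately show ?thesis by (intro exI[of _ "nat (n-1)"]) simp
  qed
qed

lemma hole:
  fixes n1 n2 :: nat and p x y :: int
  assumes n1: "n1 \<ge> 1" and n2: "n2 \<ge> 1" and p: "p = int n1 + 1"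
    and x: "x \<in> {0..int n1 - 1} \<union> (\<lambda>k. int k * p + int n1) ` {..<n2}"
    and y: "y \<in> {0..int n1 - 1} \<union> (\<lambda>k. int k * p + int n1) ` {..<n2}"
  shows "x + y \<noteq> int n2 * p + int n1"
proof
  assume eq: "x + y = int n2 * p + int n1"
  have p0: "p \<ge> 0" using p by simp
  have np: "p \<le> int n2 * p" using mono_k2[OF n2 p0] by simp
  have oneB: False if a: "a \<in> {0..int n1 - 1}" and k: "k < n2" and e: "a + (int k * p + int n1) = int n2 * p + int n1" for a k
  proof -
    have "int k * p \<le> int n2 * p - p" using mono_k[OF k p0] .
    then show False using a e p by simp
  qed
  show False
  proof (cases "x \<in> {0..int n1 - 1}")
    case xA: True
    show False
    proof (cases "y \<in> {0..int n1 - 1}")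
      case True then show False using xA eq np p by simp
    next
      case False
      then obtain k where "k < n2" "y = int k * p + int n1" using y by auto
      then show False using oneB[OF xA] eq by simp
    qed
  next
    case False
    then obtain k where k: "k < n2" "x = int k * p + int n1" using x by auto
    show False
    proof (cases "y \<in> {0..int n1 - 1}")
      case True then show False using oneB[OF True k(1)] eq k by (simp add: algebra_simps)
    next
      case False
      then obtain k' where k': "k' < n2" "y = int k' * p + int n1" using y by auto
      have "p * (int k + int k' - int n2 + 1) = 1" using eq k k' p by (simp add: algebra_simps)
      then have "p dvd 1" by (metis dvdI)
      then show False using p n1 by simp
    qed
  qed
qed

lemma card4:
  assumes "finite A" "finite B" "finite X" "finite Y" "A \<inter> B = {}" "(A \<union> B) \<inter> X = {}"
    "(A \<union> B \<union> X) \<inter> Y = {}"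
  shows "card (A \<union> B \<union> X \<union> Y) = card A + card B + card X + card Y"
  using assms by (simp add: card_Un_disjoint)

lemma upper_main:
  assumes adm: "admissible N (n1, n2, lam)" and n1: "n1 \<ge> 1" and n2: "n2 \<ge> 2"
  shows "2*n1+1 \<le> N \<and> Max (symNA n1 n2 lam) \<le> fN N n1"
proof -
  have n: "n1 + n2 \<ge> 1" and cardN: "card (symNA n1 n2 lam) = N"
    and ss: "setplus (symNA n1 n2 lam) (symNA n1 n2 lam) = {0..2 * Max (symNA n1 n2 lam)}"
    using adm unfolding admissible_def by auto
  define p where "p = int n1 + 1"
  define L where "L = int n2 * p - 1"
  define l where "l = int lam"
  define A where "A = {0..int n1 - 1}"
  define B where "B = (\<lambda>k. int k * p + int n1) ` {..<n2}"
  define D where "D = symNA n1 n2 lam"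
  have p0: "p > 0" "p \<ge> 0" unfolding p_def by auto
  have l0: "l \<ge> 0" unfolding l_def by simp
  have n2p: "2 * p \<le> int n2 * p" using mono_k2[OF n2 p0(2)] by simp
  have G: "G_NA n1 n2 = A \<union> B" unfolding A_def B_def p_def G_eq ..
  have MG: "Max (G_NA n1 n2) = L" using G_max1[of n2 n1] n2 unfolding L_def p_def by simp
  have D: "D = A \<union> B \<union> (\<lambda>g. L - g + l) ` (A \<union> B)"
    unfolding D_def symNA_facts(1)[OF n] MG l_def unfolding G ..
  have finD: "finite D" unfolding D_def using symNA_facts(2)[OF n] .
  have MD: "Max D = L + l" unfolding D_def using symNA_facts(3)[OF n] MG l_def by simp
  have Dsub: "D \<subseteq> {0..L+l}" unfolding D_def using symNA_facts(4)[OF n] MG l_def by simp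
  have NN: "card D = N" unfolding D_def using cardN .
  have ss': "setplus D D = {0..2*(L+l)}" using ss MD unfolding D_def by simp
  have Bb: "int n1 \<le> x \<and> x \<le> L" if "x \<in> B" for x
  proof -
    from that obtain k where k: "k < n2" "x = int k * p + int n1" unfolding B_def by auto
    have "int k * p \<le> int n2 * p - p" by (rule mono_k[OF k(1) p0(2)])
    then show ?thesis using k p0 unfolding L_def p_def by simp
  qed
  have Ab: "0 \<le> x \<and> x \<le> int n1 - 1" if "x \<in> A" for x using that unfolding A_def by auto
  have ABL: "0 \<le> x \<and> x \<le> L" if "x \<in> A \<union> B" for x
    using that Ab Bb n2p unfolding p_def L_def by fastforce
  have inA: "x \<in> D" if "x \<in> A" for x using that unfolding D by auto
  have inB: "int k * p + int n1 \<in> D" if "k < n2" for k using that unfolding D B_def by auto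
  define E where "E = {l + int n2 * p - p + 1..l + L}"
  have inE: "x \<in> D" if "x \<in> E" for x
  proof -
    have "L + l - x \<in> A" using that unfolding E_def A_def L_def p_def by auto
    moreover have "x = L - (L + l - x) + l" by simp
    ultimately show ?thesis unfolding D by blast
  qed
  define C where "C = (\<lambda>j. l + int j * p) ` {..<n2}"
  have inC: "l + int j * p \<in> D" if "j < n2" for j
  proof -
    have "int (n2 - 1 - j) * p + int n1 \<in> B" unfolding B_def using that
      by (intro image_eqI[where x="n2 - 1 - j"]) auto
    moreover have "l + int j * p = L - (int (n2 - 1 - j) * p + int n1) + l"
      using that unfolding L_def p_def by (simp add: of_nat_diff algebra_simps)
    ultimately show ?thesis unfolding D by blast
  qed
  have geR: "x \<in> A \<union> B \<or> l \<le> x" if "x \<in> D" for x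
    using that ABL unfolding D by auto
  have finAB: "finite A" "finite B" "finite E" "finite C" unfolding A_def B_def E_def C_def by auto
  have cB: "card B = n2" unfolding B_def using B_card[OF p0(1)] by simp
  have cC: "card C = n2" unfolding C_def using B_card[OF p0(1), of l n2] by (simp add: add.commute)
  have cAE: "card A = n1" "card E = n1" unfolding A_def E_def L_def p_def by auto
  note cA = cAE(1) cB cAE(2) cC
  have disjAB: "A \<inter> B = {}" using Ab Bb by fastforce
  have cS: "card S \<le> N" if "S \<subseteq> D" for S using card_mono[OF finD that] NN by simp
  show ?thesis
  proof (cases "l \<le> int n1 - 1")
    case True
    define E' where "E' = E - {L}"
    have LE: "L \<in> E" unfolding E_def L_def p_def using True l0 by simp
    have cE': "card E' = n1 - 1" unfolding E'_def using LE finAB cA by simp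
    have d2: "(A \<union> B) \<inter> E' = {}"
    proof -
      { fix x assume x: "x \<in> A \<union> B" "x \<in> E'"
        have Em: "l + int n2 * p - p + 1 \<le> x" "x \<noteq> L" using x(2) unfolding E'_def E_def by auto
        have False
        proof (cases "x \<in> A")
          case True then show False using Ab[of x] Em n2p p_def l0 by simp
        next
          case False
          then obtain k where k: "k < n2" "x = int k * p + int n1" using x(1) unfolding B_def by auto
          show False
          proof (cases "k + 2 \<le> n2")
            case True
            have "int k * p \<le> (int n2 - 2) * p" using True p0 by (intro mult_right_mono) auto
            then show False using k Em l0 p_def by (simp add: algebra_simps)
          next
            case False
            then have "k = n2 - 1" using k by simp
            then have "x = L" using k n2 unfolding L_def p_def by (simp add: of_nat_diff algebra_simps)
            then show False using Em by simp
          qed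
        qed }
      then show ?thesis by blast
    qed
    have d3: "(A \<union> B \<union> E') \<inter> {l + p} = {}"
    proof -
      have "l + p \<notin> A" using Ab[of "l+p"] l0 p_def by auto
      moreover have "l + p \<notin> B"
      proof
        assume "l + p \<in> B"
        then obtain k where k: "k < n2" "l + p = int k * p + int n1" unfolding B_def by auto
        show False
        proof (cases k)
          case 0 then show False using k l0 p_def by simp
        next
          case (Suc m)
          have "1 * p \<le> int k * p" using Suc p0 by (intro mult_right_mono) auto
          then have "p \<le> int k * p" by simp
          then show False using k(2) True by linarith
        qed
      qed
      moreover have "l + p \<notin> E'" using n2p unfolding E'_def E_def by auto
      ultimately show ?thesis by blast
    qed
    have "card (A \<union> B \<union> E' \<union> {l + p}) = n1 + n2 + (n1 - 1) + 1"
      using card4[OF finAB(1,2) _ _ disjAB d2 d3] finAB cE' cA unfolding E'_def by simp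
    moreover have "A \<union> B \<union> E' \<union> {l + p} \<subseteq> D"
      using inA inB inE inC[of 1] n2 unfolding B_def E'_def by auto
    ultimately have "n1 + n2 + (n1 - 1) + 1 \<le> N" using cS by metis
    then have NB: "int N - 2 * int n1 \<ge> int n2" using n1 by linarith
    have "int n2 * p \<le> (int N - 2 * int n1) * p" using NB p0 by (intro mult_right_mono) auto
    then have "L + l \<le> fN N n1" using True unfolding fN_def L_def p_def by (simp add: algebra_simps)
    then show ?thesis using NB n2 MD unfolding D_def by simp
  next
    case False
    then have ln1: "l \<ge> int n1" by simp
    have hb: "l \<le> int n2 * p + int n1"
    proof (rule ccontr)
      assume nh: "\<not> l \<le> int n2 * p + int n1"
      have "0 \<le> int n1" by simp
      then have "0 \<le> int n2 * p + int n1" using n2p p0 by (smt (verit))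
      moreover have "int n2 * p + int n1 \<le> 2*(L+l)"
        using nh n2p p0 l0 unfolding L_def by (smt (verit))
      ultimately have "int n2 * p + int n1 \<in> setplus D D" unfolding ss' by simp
      then obtain x y where xy: "int n2 * p + int n1 = x + y" "x \<in> D" "y \<in> D"
        unfolding setplus_def by blast
      have "0 \<le> x" "0 \<le> y" using xy Dsub by auto
      then have "x \<in> A \<union> B" "y \<in> A \<union> B" using geR[OF xy(2)] geR[OF xy(3)] xy(1) nh by auto
      then show False using hole[OF n1 _ p_def, of n2 x y] n2 xy(1) unfolding A_def B_def by simp
    qed
    have EL: "L < y" if "y \<in> E" for y using that ln1 unfolding E_def L_def p_def by simp
    have d2: "(A \<union> B) \<inter> E = {}" using ABL EL by fastforce
    show ?thesis
    proof (cases "p dvd (l - int n1)")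
      case False
      have d3: "(A \<union> B \<union> E) \<inter> C = {}"
      proof -
        { fix c assume c: "c \<in> C" "c \<in> A \<union> B \<union> E"
          obtain j where j: "j < n2" "c = l + int j * p" using c(1) unfolding C_def by auto
          have jb: "int j * p \<le> int n2 * p - p" by (rule mono_k[OF j(1) p0(2)])
          have False
          proof -
            have "0 \<le> int j * p" using p0 by simp
            then have "c \<notin> A" using Ab[of c] j ln1 by auto
            moreover have "c \<notin> E" using jb j unfolding E_def by simp
            moreover have "c \<notin> B"
            proof
              assume "c \<in> B"
              then obtain k where k: "c = int k * p + int n1" unfolding B_def by auto
              have "l - int n1 = p * (int k - int j)" using j k by (simp add: algebra_simps)
              then show False using \<open>\<not> p dvd (l - int n1)\<close> by simp
            qed
            ultimately show False using c(2) by blast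
          qed }
        then show ?thesis by blast
      qed
      have "card (A \<union> B \<union> E \<union> C) = n1 + n2 + n1 + n2"
        using card4[OF finAB disjAB d2 d3] cA by simp
      moreover have "A \<union> B \<union> E \<union> C \<subseteq> D" using inA inB inE inC unfolding B_def C_def by auto
      ultimately have "n1 + n2 + n1 + n2 \<le> N" using cS by metis
      then have NB: "int N - 2 * int n1 \<ge> 2 * int n2" by linarith
      have "(2 * int n2) * p \<le> (int N - 2 * int n1) * p" using NB p0 by (intro mult_right_mono) auto
      then have "L + l \<le> fN N n1" using hb unfolding fN_def L_def p_def by (simp add: algebra_simps)
      then show ?thesis using NB n2 MD unfolding D_def by simp
    next
      case True
      then obtain q where q: "l - int n1 = p * q" by (auto elim: dvdE)
      have q0: "q \<ge> 0"
      proof (rule ccontr)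
        assume "\<not> q \<ge> 0"
        then have "p * q < 0" using p0 by (simp add: mult_pos_neg)
        then show False using q ln1 by simp
      qed
      have qn2: "q \<le> int n2"
      proof (rule ccontr)
        assume "\<not> q \<le> int n2"
        then have "p * int n2 < p * q" using p0 by simp
        then show False using q hb by (simp add: algebra_simps)
      qed
      define qn where "qn = nat q"
      have qn: "int qn = q" "qn \<le> n2" using q0 qn2 unfolding qn_def by auto
      define C' where "C' = (\<lambda>j. l + int j * p) ` {n2 - qn..<n2}"
      have cC': "card C' = qn"
      proof -
        have "inj_on (\<lambda>j. l + int j * p) {n2 - qn..<n2}" using p0 by (auto simp: inj_on_def)
        then show ?thesis unfolding C'_def using qn by (simp add: card_image)
      qed
      have d3: "(A \<union> B \<union> E) \<inter> C' = {}"
      proof -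
        { fix c assume c: "c \<in> C'" "c \<in> A \<union> B \<union> E"
          obtain j where j: "n2 - qn \<le> j" "j < n2" "c = l + int j * p" using c(1) unfolding C'_def by auto
          have jb: "int j * p \<le> int n2 * p - p" by (rule mono_k[OF j(2) p0(2)])
          have "(int n2 - q) * p \<le> int j * p" using j qn p0 by (intro mult_right_mono) auto
          then have "L < c" using j q unfolding L_def p_def by (simp add: algebra_simps)
          moreover have "c \<notin> E" using jb j unfolding E_def by simp
          ultimately have False using c(2) ABL by fastforce }
        then show ?thesis by blast
      qed
      have "card (A \<union> B \<union> E \<union> C') = n1 + n2 + n1 + qn"
        using card4[OF finAB(1-3) _ disjAB d2 d3] cA cC' unfolding C'_def by simp
      moreover have "A \<union> B \<union> E \<union> C' \<subseteq> D" using inA inB inE inC unfolding B_def C'_def by auto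
      ultimately have "n1 + n2 + n1 + qn \<le> N" using cS by metis
      then have NB: "int N - 2 * int n1 \<ge> int n2 + q" using qn by linarith
      have "(int n2 + q) * p \<le> (int N - 2 * int n1) * p" using NB p0 by (intro mult_right_mono) auto
      then have "L + l \<le> fN N n1" using q unfolding fN_def L_def p_def by (simp add: algebra_simps)
      then show ?thesis using NB n2 q0 MD unfolding D_def by simp
    qed
  qed
qed

lemma upper:
  assumes adm: "admissible N (n1, n2, lam)"
  shows "\<exists>a. 2*a+1 \<le> N \<and> Max (symNA n1 n2 lam) \<le> fN N a"
proof (cases "n1 = 0 \<or> n2 \<le> 1")
  case True then show ?thesis using upper_contig[OF adm] by blast
next
  case False
  then have "n1 \<ge> 1" "n2 \<ge> 2" by auto
  then show ?thesis using upper_main[OF adm] by blast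
qed

lemma CNA_adm:
  assumes "2*a+1 \<le> N"
  shows "admissible N (a, N-2*a, a)" "Max (symNA a (N-2*a) a) = fN N a"
    "symNA a (N-2*a) a = D_CNA a (N-2*a)"
proof -
  have b: "N - 2*a \<ge> 1" using assms by simp
  note P = CNA_props[of "N-2*a" a, OF b]
  show "symNA a (N-2*a) a = D_CNA a (N-2*a)" using P(1) .
  have "card (symNA a (N-2*a) a) = N" using P(1,2) assms by simp
  then show "admissible N (a, N-2*a, a)" unfolding admissible_def using P(4) b by simp
  show "Max (symNA a (N-2*a) a) = fN N a" using P(3) assms unfolding fN_def
    by (simp add: of_nat_diff algebra_simps)
qed

theorem mainTheorem6:
  fixes N :: nat
  assumes "N \<ge> 1"
  shows "\<exists>N1 N2 lam. admissible N (N1, N2, lam) \<and>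
           (\<forall>M1 M2 mu. admissible N (M1, M2, mu) \<longrightarrow>
               Max (symNA M1 M2 mu) \<le> Max (symNA N1 N2 lam)) \<and>
           (\<exists>N1' N2'. symNA N1 N2 lam = D_CNA N1' N2')"
proof -
  define S where "S = {a. 2*a+1 \<le> N}"
  have finS: "finite S" unfolding S_def by (rule finite_subset[of _ "{..N}"]) auto
  have S0: "0 \<in> S" unfolding S_def using assms by simp
  define m where "m = Max (fN N ` S)"
  have "m \<in> fN N ` S" unfolding m_def using finS S0 by (intro Max_in) auto
  then obtain a where a: "a \<in> S" "fN N a = m" by auto
  have mx: "fN N a' \<le> fN N a" if "a' \<in> S" for a'
    using a(2) finS that unfolding m_def by (simp add: Max_ge)
  have aN: "2*a+1 \<le> N" using a(1) unfolding S_def by simp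
  note C = CNA_adm[OF aN]
  show ?thesis
  proof (intro exI conjI allI impI)
    show "admissible N (a, N-2*a, a)" by (rule C(1))
    show "symNA a (N-2*a) a = D_CNA a (N-2*a)" by (rule C(3))
    fix M1 M2 mu assume "admissible N (M1, M2, mu)"
    then obtain a' where "2*a'+1 \<le> N" "Max (symNA M1 M2 mu) \<le> fN N a'" using upper by blast
    then show "Max (symNA M1 M2 mu) \<le> Max (symNA a (N-2*a) a)"
      using mx[of a'] C(2) unfolding S_def by fastforce
  qed
qed

end
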